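(* Let $\mathcal A$ be a well-structured abstract domain with functions $(\alpha,\gamma)$, and let monotone abstract operators $\llbracket e\rrbracket^\#:\mathcal A\to\mathcal A$ be given for each basic command $e$. Consider the induced Hoare-type proof system described in the context. (1) If $\llbracket e\rrbracket^\#$ is a sound abstraction of $\llbracket e\rrbracket$ for each basic command $e$, then the proof system is sound: $\vdash\{a\}S\{b\}$ implies $\models\{a\}S\{b\}$. (2) If $\llbracket e\rrbracket^\#$ is a complete abstraction of $\llbracket e\rrbracket$ for each basic command $e$, then the proof system is sound and relatively complete: $\vdash\{a\}S\{b\}$ iff $\models\{a\}S\{b\}$, for all $a,b\in\mathcal A$ and programs $S$.
   Context: Fix a finite set $V$ of quantum variables, each a qubit with state space $\mathcal H_q\cong\mathbb C^2$; for $W\subseteq V$, $\mathcal H_W=\bigotimes_{q\in W}\mathcal H_q$. Operators and subspaces on $\mathcal H_W$ are identified with their cylindrical extensions to $\mathcal H_V$, and a subspace is identified with its orthogonal projector; $P^\perp$ is the orthocomplement. $\mathcal D(\mathcal H_V)$ is the set of partial density operators (positive, trace $\le1$). Programs: $S::=\mathbf{skip}\mid \bar q:=|0\rangle\mid \bar q\mathrel{*{=}}U\mid \mathbf{assert}\ P[\bar q]\mid S_0;S_1\mid \mathbf{if}\ P[\bar q]\ \mathbf{then}\ S_1\ \mathbf{else}\ S_0\ \mathbf{end}\mid\mathbf{while}\ P[\bar q]\ \mathbf{do}\ S\ \mathbf{end}$, with $\bar q=q_1,\dots,q_t$ distinct variables, $U$ unitary on $\mathcal H_{\bar q}$, $P$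 a subspace of $\mathcal H_{\bar q}$; the first four forms are the basic commands. Semantics $\llbracket S\rrbracket:\mathcal D(\mathcal H_V)\to\mathcal D(\mathcal H_V)$: $\llbracket\mathbf{skip}\rrbracket(\rho)=\rho$; $\llbracket\bar q:=|0\rangle\rrbracket(\rho)=\sum_{i=0}^{2^t-1}|0\rangle_{\bar q}\langle i|\rho|i\rangle_{\bar q}\langle0|$; $\llbracket\bar q\mathrel{*{=}}U\rrbracket(\rho)=U\rho U^\dagger$; $\llbracket\mathbf{assert}\ P[\bar q]\rrbracket(\rho)=P\rho P$; $\llbracket S_0;S_1\rrbracket=\llbracket S_1\rrbracket\circ\llbracket S_0\rrbracket$; $\llbracket\mathbf{if}\ P[\bar q]\ \mathbf{then}\ S_1\ \mathbf{else}\ S_0\ \mathbf{end}\rrbracket(\rho)=\llbracket\mathbf{assert}\ P[\bar q];S_1\rrbracket(\rho)+\llbracket\mathbf{assert}\ P^\perp[\bar q];S_0\rrbracket(\rho)$; $\llbracket\mathbf{while}\ P[\bar q]\ \mathbf{do}\ S\ \mathbf{end}\rrbracket(\rho)=\sum_{i\ge0}\llbracket(\mathbf{assert}\ P[\bar q];S)^i;\mathbf{assert}\ P^\perp[\bar q]\rrbracket(\rho)$, where $T^i$ is $i$-fold sequential composition ($T^0=\mathbf{skip}$). The concrete domain is $\mathcal Q=2^{\mathcal D(\mathcal H_V)}$ ordered by inclusion, and $\llbracket S\rrbracket(R)=\{\llbracket S\rrbracket(\rho):\rho\in R\}$. A pair of monotone maps $(\alpha,\gamma)$ between posets is a Galois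 connection if $c\le\gamma(a)\iff\alpha(c)\le a$, and a Galois embedding if moreover $\alpha\circ\gamma=\mathrm{id}$. A complete lattice $(\mathcal A,\le_{\mathcal A},\vee,\wedge,\bot,\top)$ with monotone $\alpha:\mathcal Q\to\mathcal A$, $\gamma:\mathcal A\to\mathcal Q$ is a well-structured abstract domain if (a) $(\alpha,\gamma)$ is a Galois embedding, and (b) for any family $\rho_i\in\mathcal D(\mathcal H_V)$ and reals $x_i>0$ with $\sum_i x_i\rho_i\in\mathcal D(\mathcal H_V)$, $\alpha(\sum_i x_i\rho_i)=\bigvee_i\alpha(\rho_i)$, where $\alpha(\rho)=\alpha(\{\rho\})$. For $f:\mathcal Q\to\mathcal Q$, $f^\#:\mathcal A\to\mathcal A$ is a sound abstraction if $\alpha\circ f\le_{\mathcal A}f^\#\circ\alpha$ pointwise, a complete abstraction if $\alpha\circ f=f^\#\circ\alpha$. Induced Hoare system: assertions are elements of $\mathcal A$; a triple $\{a\}S\{b\}$ is valid, $\models\{a\}S\{b\}$, iff $\llbracket S\rrbracket(\gamma(a))\subseteq\gamma(b)$. Derivability $\vdash\{a\}S\{b\}$ is w.r.t. the rules: (Exp) $\{a\}e\{\llbracket e\rrbracket^\#(a)\}$ for every basic command $e$; (Seq) from $\{a\}S_0\{a'\}$ and $\{a'\}S_1\{b\}$ infer $\{a\}S_0;S_1\{b\}$; (Imp) from $a\le_{\mathcal A}a'$, $\{a'\}S\{b'\}$, $b'\le_{\mathcal A}b$ infer $\{a\}S\{b\}$; (Meas) from $\{a\}\mathbf{assert}\ P[\bar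 q];S_1\{b_1\}$ and $\{a\}\mathbf{assert}\ P^\perp[\bar q];S_0\{b_0\}$ infer $\{a\}\mathbf{if}\ P[\bar q]\ \mathbf{then}\ S_1\ \mathbf{else}\ S_0\ \mathbf{end}\{b_0\vee b_1\}$; (While) from $\{a\}\mathbf{assert}\ P[\bar q];S\{a\}$ and $\{a\}\mathbf{assert}\ P^\perp[\bar q]\{b\}$ infer $\{a\}\mathbf{while}\ P[\bar q]\ \mathbf{do}\ S\ \mathbf{end}\{b\}$. *)

theory Defs
  imports "HOL-Analysis.Analysis"
begin

text \<open>Quantum variables form a finite type 'v (the set V = UNIV). A computational basis
state of H_V is an assignment 'v => bool, so H_V = C^(2^|V|). Operators on H_V are
matrices indexed by basis states: entry A $ i $ j = <i|A|j>.\<close>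

type_synonym 'v qop = "complex ^ ('v \<Rightarrow> bool) ^ ('v \<Rightarrow> bool)"

text \<open>Local operators on H_qs for a register qs = [q1,...,qt]: matrices indexed by
bool lists of length t (bit k is the value of q_(k+1)); values at other lists are irrelevant.\<close>

type_synonym lop = "bool list \<Rightarrow> bool list \<Rightarrow> complex"

definition lists_len :: "nat \<Rightarrow> bool list set" where
  "lists_len t = {z. length z = t}"

definition cyl :: "'v list \<Rightarrow> lop \<Rightarrow> ('v::finite) qop" where
  "cyl qs A = (\<chi> i j. if (\<forall>v. v \<notin> set qs \<longrightarrow> i v = j v)
                        then A (map i qs) (map j qs) else 0)"

definition adj :: "('v::finite) qop \<Rightarrow> 'v qop" where
  "adj A = (\<chi> i j. cnj (A $ j $ i))"

definition lunitary :: "nat \<Rightarrow> lop \<Rightarrow> bool" where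
  "lunitary t U \<longleftrightarrow>
     (\<forall>x\<in>lists_len t. \<forall>y\<in>lists_len t.
        (\<Sum>z\<in>lists_len t. cnj (U z x) * U z y) = (if x = y then 1 else 0)) \<and>
     (\<forall>x\<in>lists_len t. \<forall>y\<in>lists_len t.
        (\<Sum>z\<in>lists_len t. U x z * cnj (U y z)) = (if x = y then 1 else 0))"

text \<open>A subspace of H_qs, identified with its orthogonal projector.\<close>
definition lprojector :: "nat \<Rightarrow> lop \<Rightarrow> bool" where
  "lprojector t P \<longleftrightarrow>
     (\<forall>x\<in>lists_len t. \<forall>y\<in>lists_len t. P x y = cnj (P y x)) \<and>
     (\<forall>x\<in>lists_len t. \<forall>y\<in>lists_len t. (\<Sum>z\<in>lists_len t. P x z * P z y) = P x y)"

definition lcompl :: "lop \<Rightarrow> lop" where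
  "lcompl P = (\<lambda>x y. (if x = y then 1 else 0) - P x y)"

definition psd :: "('v::finite) qop \<Rightarrow> bool" where
  "psd A \<longleftrightarrow> (\<forall>x :: complex ^ ('v \<Rightarrow> bool).
      Im (\<Sum>i\<in>UNIV. \<Sum>j\<in>UNIV. cnj (x $ i) * A $ i $ j * x $ j) = 0 \<and>
      Re (\<Sum>i\<in>UNIV. \<Sum>j\<in>UNIV. cnj (x $ i) * A $ i $ j * x $ j) \<ge> 0)"

definition Dens :: "('v::finite) qop set" where
  "Dens = {\<rho>. psd \<rho> \<and> Re (trace \<rho>) \<le> 1}"

datatype 'v prog =
    Skip
  | Init "'v list"
  | Apply "'v list" lop
  | Assert "'v list" lop
  | Seq "'v prog" "'v prog"
  | If "'v list" lop "'v prog" "'v prog"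
  | While "'v list" lop "'v prog"

fun basic :: "'v prog \<Rightarrow> bool" where
  "basic Skip = True"
| "basic (Init qs) = True"
| "basic (Apply qs U) = True"
| "basic (Assert qs P) = True"
| "basic _ = False"

fun wf_prog :: "'v prog \<Rightarrow> bool" where
  "wf_prog Skip = True"
| "wf_prog (Init qs) = (qs \<noteq> [] \<and> distinct qs)"
| "wf_prog (Apply qs U) = (qs \<noteq> [] \<and> distinct qs \<and> lunitary (length qs) U)"
| "wf_prog (Assert qs P) = (qs \<noteq> [] \<and> distinct qs \<and> lprojector (length qs) P)"
| "wf_prog (Seq S0 S1) = (wf_prog S0 \<and> wf_prog S1)"
| "wf_prog (If qs P S1 S0) =
     (qs \<noteq> [] \<and> distinct qs \<and> lprojector (length qs) P \<and> wf_prog S1 \<and> wf_prog S0)"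
| "wf_prog (While qs P S) =
     (qs \<noteq> [] \<and> distinct qs \<and> lprojector (length qs) P \<and> wf_prog S)"

definition ket0bra :: "nat \<Rightarrow> bool list \<Rightarrow> lop" where
  "ket0bra t i = (\<lambda>x y. if x = replicate t False \<and> y = i then 1 else 0)"

definition assert_op :: "'v list \<Rightarrow> lop \<Rightarrow> ('v::finite) qop \<Rightarrow> 'v qop" where
  "assert_op qs P \<rho> = cyl qs P ** \<rho> ** cyl qs P"

fun sem :: "'v prog \<Rightarrow> ('v::finite) qop \<Rightarrow> 'v qop" where
  "sem Skip \<rho> = \<rho>"
| "sem (Init qs) \<rho> =
     (\<Sum>i\<in>lists_len (length qs).
        cyl qs (ket0bra (length qs) i) ** \<rho> ** adj (cyl qs (ket0bra (length qs) i)))"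
| "sem (Apply qs U) \<rho> = cyl qs U ** \<rho> ** adj (cyl qs U)"
| "sem (Assert qs P) \<rho> = assert_op qs P \<rho>"
| "sem (Seq S0 S1) \<rho> = sem S1 (sem S0 \<rho>)"
| "sem (If qs P S1 S0) \<rho> = sem S1 (assert_op qs P \<rho>) + sem S0 (assert_op qs (lcompl P) \<rho>)"
| "sem (While qs P S) \<rho> =
     (\<Sum>k. assert_op qs (lcompl P) (((\<lambda>\<sigma>. sem S (assert_op qs P \<sigma>)) ^^ k) \<rho>))"

text \<open>Concrete domain Q = subsets of Dens, ordered by inclusion. alpha is only
meaningful on subsets of Dens; gamma must land in Q.\<close>

definition well_structured ::
  "(('v::finite) qop set \<Rightarrow> 'a::complete_lattice) \<Rightarrow> ('a \<Rightarrow> 'v qop set) \<Rightarrow> bool" where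
  "well_structured \<alpha> \<gamma> \<longleftrightarrow>
     (\<forall>a. \<gamma> a \<subseteq> Dens) \<and>
     (\<forall>c c'. c \<subseteq> c' \<and> c' \<subseteq> Dens \<longrightarrow> \<alpha> c \<le> \<alpha> c') \<and>
     mono \<gamma> \<and>
     (\<forall>c a. c \<subseteq> Dens \<longrightarrow> (c \<subseteq> \<gamma> a \<longleftrightarrow> \<alpha> c \<le> a)) \<and>
     (\<forall>a. \<alpha> (\<gamma> a) = a) \<and>
     (\<forall>(I::nat set) (\<rho>::nat \<Rightarrow> 'v qop) (x::nat \<Rightarrow> real) \<sigma>.
        (\<forall>i\<in>I. \<rho> i \<in> Dens \<and> x i > 0) \<and>
        ((\<lambda>i. x i *\<^sub>R \<rho> i) has_sum \<sigma>) I \<and> \<sigma> \<in> Dens \<longrightarrow>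
        \<alpha> {\<sigma>} = (SUP i\<in>I. \<alpha> {\<rho> i}))"

definition sound_abs ::
  "(('v::finite) qop set \<Rightarrow> 'a::complete_lattice) \<Rightarrow> ('v qop \<Rightarrow> 'v qop) \<Rightarrow> ('a \<Rightarrow> 'a) \<Rightarrow> bool" where
  "sound_abs \<alpha> f fa \<longleftrightarrow> (\<forall>c. c \<subseteq> Dens \<longrightarrow> \<alpha> (f ` c) \<le> fa (\<alpha> c))"

definition complete_abs ::
  "(('v::finite) qop set \<Rightarrow> 'a::complete_lattice) \<Rightarrow> ('v qop \<Rightarrow> 'v qop) \<Rightarrow> ('a \<Rightarrow> 'a) \<Rightarrow> bool" where
  "complete_abs \<alpha> f fa \<longleftrightarrow> (\<forall>c. c \<subseteq> Dens \<longrightarrow> \<alpha> (f ` c) = fa (\<alpha> c))"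

definition valid :: "('a \<Rightarrow> ('v::finite) qop set) \<Rightarrow> 'a \<Rightarrow> 'v prog \<Rightarrow> 'a \<Rightarrow> bool" where
  "valid \<gamma> a S b \<longleftrightarrow> sem S ` \<gamma> a \<subseteq> \<gamma> b"

inductive hoare :: "('v prog \<Rightarrow> 'a::complete_lattice \<Rightarrow> 'a) \<Rightarrow> 'a \<Rightarrow> 'v prog \<Rightarrow> 'a \<Rightarrow> bool"
  for absop :: "'v prog \<Rightarrow> 'a \<Rightarrow> 'a" where
  Exp: "basic e \<Longrightarrow> hoare absop a e (absop e a)"
| SeqR: "hoare absop a S0 a' \<Longrightarrow> hoare absop a' S1 b \<Longrightarrow> hoare absop a (Seq S0 S1) b"
| Imp: "a \<le> a' \<Longrightarrow> hoare absop a' S b' \<Longrightarrow> b' \<le> b \<Longrightarrow> hoare absop a S b"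
| Meas: "hoare absop a (Seq (Assert qs P) S1) b1 \<Longrightarrow>
         hoare absop a (Seq (Assert qs (lcompl P)) S0) b0 \<Longrightarrow>
         hoare absop a (If qs P S1 S0) (sup b0 b1)"
| WhileR: "hoare absop a (Seq (Assert qs P) S) a \<Longrightarrow>
           hoare absop a (Assert qs (lcompl P)) b \<Longrightarrow>
           hoare absop a (While qs P S) b"

end

theory Submission
  imports Defs
begin


definition qf :: "('v::finite) qop \<Rightarrow> complex^('v\<Rightarrow>bool) \<Rightarrow> complex" where
  "qf A x = (\<Sum>i\<in>UNIV. cnj (x$i) * (A *v x)$i)"

lemma psd_qf: "psd A \<longleftrightarrow> (\<forall>x. Im (qf A x) = 0 \<and> Re (qf A x) \<ge> 0)"
proof -
  have "\<And>x. qf A x = (\<Sum>i\<in>UNIV. \<Sum>j\<in>UNIV. cnj (x $ i) * A $ i $ j * x $ j)"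
    by (simp add: qf_def matrix_vector_mult_def sum_distrib_left mult.assoc)
  then show ?thesis by (simp add: psd_def)
qed

lemma adj_swap: "(\<Sum>i\<in>UNIV. cnj (x$i) * (M *v z)$i) = (\<Sum>k\<in>UNIV. cnj ((adj M *v x)$k) * z$k)"
proof -
  have "(\<Sum>i\<in>UNIV. cnj (x$i) * (M *v z)$i) = (\<Sum>i\<in>UNIV. \<Sum>k\<in>UNIV. cnj(x$i) * M$i$k * z$k)"
    by (simp add: matrix_vector_mult_def sum_distrib_left mult.assoc)
  also have "\<dots> = (\<Sum>k\<in>UNIV. \<Sum>i\<in>UNIV. cnj(x$i) * M$i$k * z$k)"
    by (rule sum.swap)
  also have "\<dots> = (\<Sum>k\<in>UNIV. cnj ((adj M *v x)$k) * z$k)"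
    by (simp add: matrix_vector_mult_def adj_def sum_distrib_left sum_distrib_right mult.commute mult.left_commute)
  finally show ?thesis .
qed

lemma qf_conj: "qf (M ** A ** adj M) x = qf A (adj M *v x)"
  by (simp add: qf_def matrix_vector_mul_assoc[symmetric] adj_swap)

lemma psd_conj: "psd A \<Longrightarrow> psd (M ** A ** adj M)"
  by (simp add: psd_qf qf_conj)

lemma qf_add: "qf (A + B) x = qf A x + qf B x"
  by (simp add: qf_def matrix_vector_mult_def sum.distrib ring_distribs)

lemma qf_zero: "qf 0 x = 0"
  by (simp add: qf_def matrix_vector_mult_def)

lemma psd_add: "psd A \<Longrightarrow> psd B \<Longrightarrow> psd (A + B)"
  by (simp add: psd_qf qf_add)

lemma psd_zero: "psd 0"
  by (simp add: psd_qf qf_zero)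

lemma psd_sum: "finite I \<Longrightarrow> (\<And>i. i \<in> I \<Longrightarrow> psd (f i)) \<Longrightarrow> psd (\<Sum>i\<in>I. f i)"
  by (induction I rule: finite_induct) (auto simp: psd_zero psd_add)

lemma sum_two_pts:
  fixes f :: "'n::finite \<Rightarrow> complex"
  assumes "i \<noteq> j"
  shows "(\<Sum>l\<in>UNIV. f l * (if l = i then a else if l = j then b else 0)) = f i * a + f j * b"
proof -
  have "(\<Sum>l\<in>UNIV. f l * (if l = i then a else if l = j then b else 0)) =
        (\<Sum>l\<in>UNIV. (if l = i then f i * a else 0) + (if l = j then f j * b else 0))"
    by (rule sum.cong) (use assms in auto)
  also have "\<dots> = f i * a + f j * b" by (simp add: sum.distrib)
  finally show ?thesis .
qed

lemma delta_sum_r: "(\<Sum>j\<in>UNIV. (f::'n::finite \<Rightarrow> _) j * (if j = i then 1 else 0)) = (f i :: 'a::comm_semiring_1)"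
proof -
  have "(\<Sum>j\<in>UNIV. f j * (if j = i then 1 else 0)) = (\<Sum>j\<in>UNIV. if j = i then f i else 0)"
    by (rule sum.cong) auto
  then show ?thesis by simp
qed

lemma delta_sum_l: "(\<Sum>j\<in>UNIV. (if j = i then 1 else 0) * (f::'n::finite \<Rightarrow> _) j) = (f i :: 'a::comm_semiring_1)"
  using delta_sum_r[of f i] by (simp add: mult.commute)

lemma qf_axis: "qf A (axis i 1) = A$i$i"
  by (simp add: qf_def matrix_vector_mult_def axis_def if_distrib[of cnj] delta_sum_r delta_sum_l cong: if_cong)

lemma psd_diag: "psd A \<Longrightarrow> Im (A$i$i) = 0 \<and> Re (A$i$i) \<ge> 0"
  using qf_axis[of A i] by (metis psd_qf)

lemma qf_two:
  assumes "i \<noteq> j"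
  shows "qf A (\<chi> k. if k = i then 1 else if k = j then w else 0) =
         A$i$i + A$i$j * w + cnj w * (A$j$i + A$j$j * w)"
proof -
  let ?x = "(\<chi> k. if k = i then 1 else if k = j then w else 0) :: complex^_"
  have mv: "(A *v ?x)$k = A$k$i + A$k$j * w" for k
    unfolding matrix_vector_mult_def using sum_two_pts[OF assms, of "\<lambda>l. A$k$l" 1 w] by simp
  have "qf A ?x = (\<Sum>k\<in>UNIV. (A *v ?x)$k * (if k = i then 1 else if k = j then cnj w else 0))"
    unfolding qf_def by (rule sum.cong) auto
  also have "\<dots> = (A *v ?x)$i * 1 + (A *v ?x)$j * cnj w"
    by (rule sum_two_pts[OF assms])
  finally show ?thesis by (simp add: mv algebra_simps)
qed

lemma psd_offdiag:
  assumes "psd A"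
  shows "cmod (A$i$j) \<le> Re (A$i$i) + Re (A$j$j)"
proof (cases "i = j")
  case True
  then show ?thesis using psd_diag[OF assms, of j] by (simp add: cmod_eq_Re)
next
  case False
  have q: "\<And>w. Im (qf A (\<chi> k. if k = i then 1 else if k = j then w else 0)) = 0 \<and>
      Re (qf A (\<chi> k. if k = i then 1 else if k = j then w else 0)) \<ge> 0"
    using assms psd_qf by blast
  have d1: "Im (A$i$i) = 0" "Im (A$j$j) = 0" using psd_diag[OF assms] by auto
  note hs = q[of 1] q[of "-1"] q[of "\<i>"] q[of "-\<i>"]
  have "Im (A$i$j) + Im (A$j$i) = 0" "Re (A$i$j) - Re (A$j$i) = 0"
    "Re (A$i$i) + Re (A$j$j) + Re (A$i$j) + Re (A$j$i) \<ge> 0"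
    "Re (A$i$i) + Re (A$j$j) - Re (A$i$j) - Re (A$j$i) \<ge> 0"
    "Re (A$i$i) + Re (A$j$j) - Im (A$i$j) + Im (A$j$i) \<ge> 0"
    "Re (A$i$i) + Re (A$j$j) + Im (A$i$j) - Im (A$j$i) \<ge> 0"
    using hs d1 by (simp_all add: qf_two[OF False] algebra_simps)
  moreover have "cmod (A$i$j) \<le> \<bar>Re (A$i$j)\<bar> + \<bar>Im (A$i$j)\<bar>" by (rule cmod_le)
  ultimately show ?thesis by linarith
qed

lemma norm_vec_le: "norm (x::'a::real_normed_vector^'n) \<le> (\<Sum>i\<in>UNIV. norm (x$i))"
  unfolding norm_vec_def by (rule L2_set_le_sum) simp

lemma psd_trace: "psd A \<Longrightarrow> Im (trace A) = 0 \<and> Re (trace A) \<ge> 0"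
  by (simp add: trace_def Re_sum Im_sum psd_diag sum_nonneg)

lemma norm_psd:
  fixes A :: "('v::finite) qop"
  assumes "psd A"
  shows "norm A \<le> 2 * real CARD('v \<Rightarrow> bool) * Re (trace A)"
proof -
  have "norm A \<le> (\<Sum>i\<in>UNIV. norm (A$i))" by (rule norm_vec_le)
  also have "\<dots> \<le> (\<Sum>i\<in>UNIV. \<Sum>j\<in>UNIV. cmod (A$i$j))"
    by (rule sum_mono) (rule norm_vec_le)
  also have "\<dots> \<le> (\<Sum>i\<in>UNIV. \<Sum>j\<in>UNIV. Re (A$i$i) + Re (A$j$j))"
    by (intro sum_mono psd_offdiag assms)
  also have "\<dots> = 2 * real CARD('v \<Rightarrow> bool) * Re (trace A)"
    by (simp add: sum.distrib trace_def Re_sum sum_distrib_left[symmetric] algebra_simps)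
  finally show ?thesis .
qed

lemma trace_conj: "trace (M ** A ** adj M) = trace (adj M ** M ** A)"
  by (metis matrix_mul_assoc trace_mul_sym)

lemma matrix_add_rdist: "((A::('a::comm_semiring_1)^'n^'m) + B) ** C = A ** C + B ** C"
  by (simp add: matrix_matrix_mult_def vec_eq_iff ring_distribs sum.distrib)

lemma trace_sum: "trace (\<Sum>i\<in>I. f i) = (\<Sum>i\<in>I. trace (f i))"
  by (cases "finite I") (simp_all add: trace_def sum.swap[of _ I])

lemma matrix_sum_rdist: "(\<Sum>i\<in>I. f i) ** (C::('a::comm_semiring_1)^'n^'m) = (\<Sum>i\<in>I. f i ** C)"
  by (cases "finite I") (simp_all add: matrix_matrix_mult_def vec_eq_iff sum_distrib_right sum.swap[of _ I])

definition agree :: "'v list \<Rightarrow> ('v \<Rightarrow> bool) \<Rightarrow> ('v \<Rightarrow> bool) \<Rightarrow> bool" where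
  "agree qs i j \<longleftrightarrow> (\<forall>v. v \<notin> set qs \<longrightarrow> i v = j v)"

lemma cyl_nth: "(cyl qs A :: ('v::finite) qop) $ i $ j = (if agree qs i j then A (map i qs) (map j qs) else 0)"
  by (simp add: cyl_def agree_def)

lemma agree_sym: "agree qs i j = agree qs j i"
  by (auto simp: agree_def)

lemma agree_trans: "agree qs i j \<Longrightarrow> agree qs j k \<Longrightarrow> agree qs i k"
  by (auto simp: agree_def)

lemma agree_eq: "(agree qs i j \<and> map i qs = map j qs) \<longleftrightarrow> i = j"
  by (auto simp: agree_def fun_eq_iff)

definition lmul :: "nat \<Rightarrow> lop \<Rightarrow> lop \<Rightarrow> lop" where
  "lmul t A B = (\<lambda>x y. \<Sum>z\<in>lists_len t. A x z * B z y)"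

lemma map_bij:
  assumes "distinct qs"
  shows "bij_betw (\<lambda>j. map j qs) {j. \<forall>v. v \<notin> set qs \<longrightarrow> i v = j v} (lists_len (length qs))"
  unfolding bij_betw_def
proof (intro conjI)
  show "inj_on (\<lambda>j. map j qs) {j. \<forall>v. v \<notin> set qs \<longrightarrow> i v = j v}"
    by (auto simp: inj_on_def fun_eq_iff)
  show "(\<lambda>j. map j qs) ` {j. \<forall>v. v \<notin> set qs \<longrightarrow> i v = j v} = lists_len (length qs)"
  proof
    show "(\<lambda>j. map j qs) ` {j. \<forall>v. v \<notin> set qs \<longrightarrow> i v = j v} \<subseteq> lists_len (length qs)"
      by (auto simp: lists_len_def)
    show "lists_len (length qs) \<subseteq> (\<lambda>j. map j qs) ` {j. \<forall>v. v \<notin> set qs \<longrightarrow> i v = j v}"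
    proof
      fix z assume z: "z \<in> lists_len (length qs)"
      define j where "j = (\<lambda>v. if v \<in> set qs then z ! (THE n. n < length qs \<and> qs!n = v) else i v)"
      have "map j qs = z"
      proof (rule nth_equalityI)
        show "length (map j qs) = length z" using z by (simp add: lists_len_def)
        fix n assume "n < length (map j qs)"
        then have n: "n < length qs" by simp
        have "(THE m. m < length qs \<and> qs!m = qs!n) = n"
          by (rule the_equality) (use n assms nth_eq_iff_index_eq in auto)
        then show "map j qs ! n = z ! n" using n by (simp add: j_def)
      qed
      moreover have "j \<in> {j. \<forall>v. v \<notin> set qs \<longrightarrow> i v = j v}" by (simp add: j_def)
      ultimately show "z \<in> (\<lambda>j. map j qs) ` {j. \<forall>v. v \<notin> set qs \<longrightarrow> i v = j v}" by blast
    qed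
  qed
qed

lemma cyl_mult:
  assumes "distinct qs"
  shows "cyl qs A ** cyl qs B = (cyl qs (lmul (length qs) A B) :: ('v::finite) qop)"
proof -
  have "(cyl qs A ** cyl qs B :: 'v qop) $ i $ k = cyl qs (lmul (length qs) A B) $ i $ k" for i k
  proof (cases "agree qs i k")
    case True
    let ?J = "{j. \<forall>v. v \<notin> set qs \<longrightarrow> i v = j v}"
    have "(cyl qs A ** cyl qs B :: 'v qop) $ i $ k =
       (\<Sum>j\<in>UNIV. if j \<in> ?J then A (map i qs) (map j qs) * B (map j qs) (map k qs) else 0)"
      unfolding matrix_matrix_mult_def cyl_nth vec_lambda_beta
    proof (intro sum.cong refl)
      fix j
      show "(if agree qs i j then A (map i qs) (map j qs) else 0) *
          (if agree qs j k then B (map j qs) (map k qs) else 0) =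
          (if j \<in> ?J then A (map i qs) (map j qs) * B (map j qs) (map k qs) else 0)"
        using True agree_trans[of qs j i k] agree_sym[of qs i j]
        by (auto simp: agree_def[of qs i j])
    qed
    also have "\<dots> = (\<Sum>j\<in>?J. A (map i qs) (map j qs) * B (map j qs) (map k qs))"
      by (simp add: sum.If_cases)
    also have "\<dots> = (\<Sum>z\<in>lists_len (length qs). A (map i qs) z * B z (map k qs))"
      by (rule sum.reindex_bij_betw[OF map_bij[OF assms]])
    finally show ?thesis using True by (simp add: cyl_nth lmul_def)
  next
    case False
    have "(cyl qs A ** cyl qs B :: 'v qop) $ i $ k = 0"
      unfolding matrix_matrix_mult_def cyl_nth vec_lambda_beta
      by (rule sum.neutral) (use False agree_trans[of qs i _ k] in auto)
    then show ?thesis using False by (simp add: cyl_nth)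
  qed
  then show ?thesis by (simp add: vec_eq_iff)
qed

lemma adj_cyl: "adj (cyl qs A :: ('v::finite) qop) = cyl qs (\<lambda>x y. cnj (A y x))"
  by (auto simp: adj_def cyl_nth vec_eq_iff agree_sym)

lemma cyl_cong: "(\<And>x y. x \<in> lists_len (length qs) \<Longrightarrow> y \<in> lists_len (length qs) \<Longrightarrow> A x y = B x y)
   \<Longrightarrow> (cyl qs A :: ('v::finite) qop) = cyl qs B"
  by (simp add: cyl_nth lists_len_def vec_eq_iff)

lemma cyl_id: "(cyl qs (\<lambda>x y. if x = y then 1 else 0) :: ('v::finite) qop) = mat 1"
  using agree_eq[of qs] by (auto simp: cyl_nth mat_def vec_eq_iff)

lemma cyl_add: "(cyl qs (\<lambda>x y. A x y + B x y) :: ('v::finite) qop) = cyl qs A + cyl qs B"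
  by (simp add: cyl_nth vec_eq_iff)

lemma cyl_diff: "(cyl qs (\<lambda>x y. A x y - B x y) :: ('v::finite) qop) = cyl qs A - cyl qs B"
  by (simp add: cyl_nth vec_eq_iff)

lemma cyl_sum: "(cyl qs (\<lambda>x y. \<Sum>i\<in>I. A i x y) :: ('v::finite) qop) = (\<Sum>i\<in>I. cyl qs (A i))"
  by (cases "finite I") (simp_all add: cyl_nth vec_eq_iff)

lemma finite_lists_len: "finite (lists_len t)"
proof -
  have "lists_len t = {xs::bool list. set xs \<subseteq> UNIV \<and> length xs = t}" by (auto simp: lists_len_def)
  then show ?thesis using finite_lists_length_eq[of "UNIV::bool set" t] by simp
qed

lemma ldelta_l: "x \<in> lists_len t \<Longrightarrow> (\<Sum>z\<in>lists_len t. (if x = z then 1 else 0) * f z) = (f x :: complex)"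
proof -
  assume x: "x \<in> lists_len t"
  have "(\<Sum>z\<in>lists_len t. (if x = z then 1 else 0) * f z) = (\<Sum>z\<in>lists_len t. if x = z then f x else 0)"
    by (rule sum.cong) auto
  then show ?thesis using x finite_lists_len by simp
qed

lemma ldelta_r: "y \<in> lists_len t \<Longrightarrow> (\<Sum>z\<in>lists_len t. f z * (if z = y then 1 else 0)) = (f y :: complex)"
proof -
  assume y: "y \<in> lists_len t"
  have "(\<Sum>z\<in>lists_len t. f z * (if z = y then 1 else 0)) = (\<Sum>z\<in>lists_len t. if y = z then f y else 0)"
    by (rule sum.cong) auto
  then show ?thesis using y finite_lists_len by simp
qed

lemma unitary_eff:
  assumes "distinct qs" "lunitary (length qs) U"
  shows "adj (cyl qs U) ** cyl qs U = (mat 1 :: ('v::finite) qop)"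
proof -
  have "adj (cyl qs U) ** cyl qs U = (cyl qs (lmul (length qs) (\<lambda>x y. cnj (U y x)) U) :: 'v qop)"
    by (simp add: adj_cyl cyl_mult[OF assms(1)])
  also have "\<dots> = cyl qs (\<lambda>x y. if x = y then 1 else 0)"
    by (rule cyl_cong) (use assms(2) in \<open>simp add: lmul_def lunitary_def\<close>)
  finally show ?thesis by (simp add: cyl_id)
qed

lemma proj_adj:
  assumes "lprojector (length qs) P"
  shows "adj (cyl qs P) = (cyl qs P :: ('v::finite) qop)"
  unfolding adj_cyl
proof (rule cyl_cong)
  fix x y assume "x \<in> lists_len (length qs)" "y \<in> lists_len (length qs)"
  then have "P x y = cnj (P y x)" using assms unfolding lprojector_def by blast
  then show "cnj (P y x) = P x y" by simp
qed

lemma proj_idem: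
  assumes "distinct qs" "lprojector (length qs) P"
  shows "cyl qs P ** cyl qs P = (cyl qs P :: ('v::finite) qop)"
  unfolding cyl_mult[OF assms(1)]
proof (rule cyl_cong)
  fix x y assume "x \<in> lists_len (length qs)" "y \<in> lists_len (length qs)"
  then show "lmul (length qs) P P x y = P x y" using assms(2) unfolding lprojector_def lmul_def by blast
qed

lemma lcompl_proj:
  assumes "lprojector t P"
  shows "lprojector t (lcompl P)"
  unfolding lprojector_def
proof (intro conjI ballI)
  fix x y assume x: "x \<in> lists_len t" and y: "y \<in> lists_len t"
  have herm: "P x y = cnj (P y x)" using assms x y unfolding lprojector_def by blast
  have idem: "(\<Sum>z\<in>lists_len t. P x z * P z y) = P x y" using assms x y unfolding lprojector_def by blast
  show "lcompl P x y = cnj (lcompl P y x)" using herm by (simp add: lcompl_def)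
  have "(\<Sum>z\<in>lists_len t. lcompl P x z * lcompl P z y) =
        (\<Sum>z\<in>lists_len t. (if x = z then 1 else 0) * (if z = y then 1 else 0))
      - (\<Sum>z\<in>lists_len t. (if x = z then 1 else 0) * P z y)
      - (\<Sum>z\<in>lists_len t. P x z * (if z = y then 1 else 0))
      + (\<Sum>z\<in>lists_len t. P x z * P z y)"
    by (simp add: lcompl_def algebra_simps sum.distrib sum_subtractf)
  also have "\<dots> = lcompl P x y"
    using x y by (simp add: ldelta_l ldelta_r idem lcompl_def)
  finally show "(\<Sum>z\<in>lists_len t. lcompl P x z * lcompl P z y) = lcompl P x y" .
qed

lemma proj_compl_sum: "cyl qs P + cyl qs (lcompl P) = (mat 1 :: ('v::finite) qop)"
proof -
  have "cyl qs P + cyl qs (lcompl P) = (cyl qs (\<lambda>x y. P x y + lcompl P x y) :: 'v qop)"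
    by (rule cyl_add[symmetric])
  also have "(\<lambda>x y. P x y + lcompl P x y) = (\<lambda>x y. if x = y then 1 else 0)"
    by (simp add: lcompl_def fun_eq_iff)
  finally show ?thesis by (simp add: cyl_id)
qed

lemma assert_conj:
  assumes "lprojector (length qs) P"
  shows "assert_op qs P \<rho> = cyl qs P ** \<rho> ** adj (cyl qs P)"
  by (simp add: assert_op_def proj_adj[OF assms])

lemma psd_assert:
  assumes "lprojector (length qs) P" "psd \<rho>"
  shows "psd (assert_op qs P \<rho>)"
  unfolding assert_conj[OF assms(1)] by (rule psd_conj[OF assms(2)])

lemma trace_assert:
  assumes "distinct qs" "lprojector (length qs) P"
  shows "trace (assert_op qs P \<rho>) = trace (cyl qs P ** (\<rho> :: ('v::finite) qop))"
proof -
  have "trace (assert_op qs P \<rho>) = trace (adj (cyl qs P) ** cyl qs P ** \<rho>)"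
    by (simp only: assert_conj[OF assms(2)] trace_conj)
  also have "\<dots> = trace (cyl qs P ** \<rho>)" by (simp add: proj_adj[OF assms(2)] proj_idem[OF assms])
  finally show ?thesis .
qed

lemma trace_assert_split:
  assumes "distinct qs" "lprojector (length qs) P"
  shows "trace (assert_op qs P \<rho>) + trace (assert_op qs (lcompl P) \<rho>) = trace (\<rho> :: ('v::finite) qop)"
proof -
  have "trace (assert_op qs P \<rho>) + trace (assert_op qs (lcompl P) \<rho>) =
        trace ((cyl qs P + cyl qs (lcompl P)) ** \<rho>)"
    by (simp add: trace_assert[OF assms] trace_assert[OF assms(1) lcompl_proj[OF assms(2)]]
        matrix_add_rdist trace_add)
  then show ?thesis by (simp add: proj_compl_sum)
qed

lemma init_eff:
  assumes "distinct qs"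
  shows "(\<Sum>i\<in>lists_len (length qs). adj (cyl qs (ket0bra (length qs) i)) ** cyl qs (ket0bra (length qs) i))
     = (mat 1 :: ('v::finite) qop)"
proof -
  let ?t = "length qs"
  have r: "replicate ?t False \<in> lists_len ?t" by (simp add: lists_len_def)
  have e1: "adj (cyl qs (ket0bra ?t i)) ** cyl qs (ket0bra ?t i) =
            (cyl qs (\<lambda>x y. if x = i \<and> y = i then 1 else 0) :: 'v qop)" for i
  proof -
    have "adj (cyl qs (ket0bra ?t i)) ** cyl qs (ket0bra ?t i) =
          (cyl qs (lmul ?t (\<lambda>x y. cnj (ket0bra ?t i y x)) (ket0bra ?t i)) :: 'v qop)"
      by (simp add: adj_cyl cyl_mult[OF assms])
    also have "\<dots> = cyl qs (\<lambda>x y. if x = i \<and> y = i then 1 else 0)"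
    proof (rule cyl_cong)
      fix x y
      have "lmul ?t (\<lambda>x y. cnj (ket0bra ?t i y x)) (ket0bra ?t i) x y =
            (\<Sum>z\<in>lists_len ?t. if replicate ?t False = z then (if x = i \<and> y = i then 1 else 0) else 0)"
        unfolding lmul_def ket0bra_def by (rule sum.cong) auto
      also have "\<dots> = (if x = i \<and> y = i then 1 else 0)" using r finite_lists_len by simp
      finally show "lmul ?t (\<lambda>x y. cnj (ket0bra ?t i y x)) (ket0bra ?t i) x y = (if x = i \<and> y = i then 1 else 0)" .
    qed
    finally show ?thesis .
  qed
  have "(\<Sum>i\<in>lists_len ?t. adj (cyl qs (ket0bra ?t i)) ** cyl qs (ket0bra ?t i)) =
        (cyl qs (\<lambda>x y. \<Sum>i\<in>lists_len ?t. if x = i \<and> y = i then 1 else 0) :: 'v qop)"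
    by (simp add: e1 cyl_sum)
  also have "\<dots> = cyl qs (\<lambda>x y. if x = y then 1 else 0)"
  proof (rule cyl_cong)
    fix x y assume x: "x \<in> lists_len ?t"
    have "(\<Sum>i\<in>lists_len ?t. if x = i \<and> y = i then 1 else 0) =
          (\<Sum>i\<in>lists_len ?t. if x = i then (if x = y then 1 else 0) else (0::complex))"
      by (rule sum.cong) auto
    also have "\<dots> = (if x = y then 1 else 0)" using x finite_lists_len by simp
    finally show "(\<Sum>i\<in>lists_len ?t. if x = i \<and> y = i then 1 else 0) = (if x = y then 1 else (0::complex))" .
  qed
  finally show ?thesis by (simp add: cyl_id)
qed

definition good :: "(('v::finite) qop \<Rightarrow> 'v qop) \<Rightarrow> bool" where
  "good f \<longleftrightarrow> (\<forall>\<sigma>. psd \<sigma> \<longrightarrow> psd (f \<sigma>) \<and> Re (trace (f \<sigma>)) \<le> Re (trace \<sigma>))"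

definition wstep :: "'v list \<Rightarrow> lop \<Rightarrow> 'v prog \<Rightarrow> ('v::finite) qop \<Rightarrow> 'v qop" where
  "wstep qs P S = (\<lambda>\<sigma>. sem S (assert_op qs P \<sigma>))"

definition wterm :: "'v list \<Rightarrow> lop \<Rightarrow> 'v prog \<Rightarrow> ('v::finite) qop \<Rightarrow> nat \<Rightarrow> 'v qop" where
  "wterm qs P S \<rho> k = assert_op qs (lcompl P) ((wstep qs P S ^^ k) \<rho>)"

lemma sem_While': "sem (While qs P S) \<rho> = (\<Sum>k. wterm qs P S \<rho> k)"
  by (simp add: wterm_def wstep_def)

lemma sums_entry: "T sums (\<sigma>::'a::real_normed_vector^'n^'m) \<Longrightarrow> (\<lambda>k. T k $ i $ j) sums (\<sigma> $ i $ j)"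
proof -
  assume "T sums \<sigma>"
  have "bounded_linear (\<lambda>x::'a^'n^'m. x $ i $ j)"
    by (rule bounded_linear_compose[OF bounded_linear_vec_nth bounded_linear_vec_nth])
  from bounded_linear.sums[OF this \<open>T sums \<sigma>\<close>] show ?thesis .
qed

lemma psd_lim:
  fixes T :: "nat \<Rightarrow> ('v::finite) qop"
  assumes "T sums \<sigma>" "\<And>k. psd (T k)"
  shows "psd \<sigma> \<and> (\<lambda>k. Re (trace (T k))) sums Re (trace \<sigma>)"
proof
  have e: "(\<lambda>k. T k $ i $ j) sums (\<sigma> $ i $ j)" for i j by (rule sums_entry[OF assms(1)])
  have q: "(\<lambda>k. qf (T k) x) sums qf \<sigma> x" for x
    unfolding qf_def matrix_vector_mult_def vec_lambda_beta
    by (intro sums_sum sums_mult sums_mult2 e)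
  show "psd \<sigma>"
    unfolding psd_qf
  proof
    fix x
    have "(\<lambda>k. Im (qf (T k) x)) sums Im (qf \<sigma> x)" by (rule sums_Im[OF q])
    moreover have "(\<lambda>k. Im (qf (T k) x)) = (\<lambda>k. 0)" using assms(2) by (simp add: psd_qf)
    ultimately have "Im (qf \<sigma> x) = 0" by (metis sums_0 sums_unique)
    moreover have sR: "(\<lambda>k. Re (qf (T k) x)) sums Re (qf \<sigma> x)" by (rule sums_Re[OF q])
    have nn: "\<And>k. 0 \<le> Re (qf (T k) x)" using assms(2) psd_qf by blast
    have "0 \<le> Re (qf \<sigma> x)" by (rule sums_le[of "\<lambda>k. 0" "\<lambda>k. Re (qf (T k) x)", OF nn sums_zero sR])
    ultimately show "Im (qf \<sigma> x) = 0 \<and> 0 \<le> Re (qf \<sigma> x)" by simp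
  qed
  have "(\<lambda>k. trace (T k)) sums trace \<sigma>"
    unfolding trace_def by (intro sums_sum e)
  then show "(\<lambda>k. Re (trace (T k))) sums Re (trace \<sigma>)" by (rule sums_Re)
qed

lemma while_conv:
  fixes \<rho> :: "('v::finite) qop"
  assumes d: "distinct qs" and p: "lprojector (length qs) P" and g: "good (sem S)" and r: "psd \<rho>"
  shows "(\<forall>k. psd (wterm qs P S \<rho> k)) \<and> summable (\<lambda>k. norm (wterm qs P S \<rho> k)) \<and>
         (\<forall>n. (\<Sum>k<n. Re (trace (wterm qs P S \<rho> k))) \<le> Re (trace \<rho>))"
proof -
  define G where "G k = (wstep qs P S ^^ k) \<rho>" for k
  have GS: "G (Suc k) = sem S (assert_op qs P (G k))" for k by (simp add: G_def wstep_def)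
  have Gpsd: "psd (G k)" for k
    by (induction k) (use r g p in \<open>auto simp: GS G_def[of 0] good_def psd_assert\<close>)
  have Wpsd: "psd (wterm qs P S \<rho> k)" for k
    unfolding wterm_def G_def[symmetric] by (rule psd_assert[OF lcompl_proj[OF p] Gpsd])
  have step: "Re (trace (G (Suc k))) \<le> Re (trace (G k)) - Re (trace (wterm qs P S \<rho> k))" for k
  proof -
    have "Re (trace (G (Suc k))) \<le> Re (trace (assert_op qs P (G k)))"
      unfolding GS using g psd_assert[OF p Gpsd] by (simp add: good_def)
    moreover have "Re (trace (assert_op qs P (G k))) + Re (trace (wterm qs P S \<rho> k)) = Re (trace (G k))"
      using arg_cong[OF trace_assert_split[OF d p, of "G k"], of Re]
      by (simp add: wterm_def G_def)
    ultimately show ?thesis by linarith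
  qed
  have part: "(\<Sum>k<n. Re (trace (wterm qs P S \<rho> k))) + Re (trace (G n)) \<le> Re (trace \<rho>)" for n
  proof (induction n)
    case 0 then show ?case by (simp add: G_def)
  next
    case (Suc n) then show ?case using step[of n] by simp
  qed
  have bound: "(\<Sum>k<n. Re (trace (wterm qs P S \<rho> k))) \<le> Re (trace \<rho>)" for n
    using part[of n] psd_trace[OF Gpsd, of n] by linarith
  have sumtr: "summable (\<lambda>k. Re (trace (wterm qs P S \<rho> k)))"
  proof (rule bounded_imp_summable)
    show "0 \<le> Re (trace (wterm qs P S \<rho> k))" for k using psd_trace[OF Wpsd] by simp
    show "(\<Sum>k\<le>n. Re (trace (wterm qs P S \<rho> k))) \<le> Re (trace \<rho>)" for n
      using bound[of "Suc n"] by (simp add: lessThan_Suc_atMost)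
  qed
  have "summable (\<lambda>k. norm (wterm qs P S \<rho> k))"
  proof (rule summable_comparison_test)
    show "\<exists>N. \<forall>n\<ge>N. norm (norm (wterm qs P S \<rho> n)) \<le>
           2 * real CARD('v \<Rightarrow> bool) * Re (trace (wterm qs P S \<rho> n))"
      using norm_psd[OF Wpsd] by simp
    show "summable (\<lambda>n. 2 * real CARD('v \<Rightarrow> bool) * Re (trace (wterm qs P S \<rho> n)))"
      by (rule summable_mult[OF sumtr])
  qed
  then show ?thesis using Wpsd bound by blast
qed

lemma while_sums:
  fixes \<rho> :: "('v::finite) qop"
  assumes "distinct qs" "lprojector (length qs) P" "good (sem S)" "psd \<rho>"
  shows "wterm qs P S \<rho> sums sem (While qs P S) \<rho>"
    and "(wterm qs P S \<rho> has_sum sem (While qs P S) \<rho>) UNIV"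
proof -
  note c = while_conv[OF assms]
  then have "summable (wterm qs P S \<rho>)" using summable_norm_cancel by blast
  then show s: "wterm qs P S \<rho> sums sem (While qs P S) \<rho>"
    unfolding sem_While' by (rule summable_sums)
  show "(wterm qs P S \<rho> has_sum sem (While qs P S) \<rho>) UNIV"
    by (rule norm_summable_imp_has_sum[OF _ s]) (use c in blast)
qed

lemma sem_good: "wf_prog S \<Longrightarrow> good (sem S :: ('v::finite) qop \<Rightarrow> 'v qop)"
proof (induction S)
  case Skip
  then show ?case by (simp add: good_def)
next
  case (Init qs)
  let ?K = "\<lambda>i. cyl qs (ket0bra (length qs) i) :: 'v qop"
  have d: "distinct qs" using Init by simp
  show ?case unfolding good_def
  proof (intro allI impI conjI)
    fix \<rho> :: "'v qop" assume r: "psd \<rho>"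
    show "psd (sem (Init qs) \<rho>)"
      by (simp, rule psd_sum[OF finite_lists_len]) (rule psd_conj[OF r])
    have "trace (sem (Init qs) \<rho>) = (\<Sum>i\<in>lists_len (length qs). trace (adj (?K i) ** ?K i ** \<rho>))"
      by (simp add: trace_sum trace_conj)
    also have "\<dots> = trace ((\<Sum>i\<in>lists_len (length qs). adj (?K i) ** ?K i) ** \<rho>)"
      by (simp add: matrix_sum_rdist trace_sum)
    also have "\<dots> = trace \<rho>" by (simp add: init_eff[OF d])
    finally show "Re (trace (sem (Init qs) \<rho>)) \<le> Re (trace \<rho>)" by simp
  qed
next
  case (Apply qs U)
  then have d: "distinct qs" and u: "lunitary (length qs) U" by auto
  show ?case unfolding good_def
  proof (intro allI impI conjI)
    fix \<rho> :: "'v qop" assume r: "psd \<rho>"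
    show "psd (sem (Apply qs U) \<rho>)" by (simp add: psd_conj r)
    have "trace (sem (Apply qs U) \<rho>) = trace \<rho>"
      by (simp add: trace_conj unitary_eff[OF d u])
    then show "Re (trace (sem (Apply qs U) \<rho>)) \<le> Re (trace \<rho>)" by simp
  qed
next
  case (Assert qs P)
  then have d: "distinct qs" and p: "lprojector (length qs) P" by auto
  show ?case unfolding good_def
  proof (intro allI impI conjI)
    fix \<rho> :: "'v qop" assume r: "psd \<rho>"
    show "psd (sem (Assert qs P) \<rho>)" by (simp add: psd_assert[OF p r])
    have "Re (trace (assert_op qs P \<rho>)) + Re (trace (assert_op qs (lcompl P) \<rho>)) = Re (trace \<rho>)"
      using arg_cong[OF trace_assert_split[OF d p, of \<rho>], of Re] by simp
    moreover have "Re (trace (assert_op qs (lcompl P) \<rho>)) \<ge> 0"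
      using psd_trace[OF psd_assert[OF lcompl_proj[OF p] r]] by simp
    ultimately show "Re (trace (sem (Assert qs P) \<rho>)) \<le> Re (trace \<rho>)" by simp
  qed
next
  case (Seq S0 S1)
  then show ?case by (fastforce simp: good_def)
next
  case (If qs P S1 S0)
  then have d: "distinct qs" and p: "lprojector (length qs) P"
    and g1: "good (sem S1 :: 'v qop \<Rightarrow> 'v qop)" and g0: "good (sem S0 :: 'v qop \<Rightarrow> 'v qop)" by auto
  show ?case unfolding good_def
  proof (intro allI impI conjI)
    fix \<rho> :: "'v qop" assume r: "psd \<rho>"
    have a1: "psd (assert_op qs P \<rho>)" by (rule psd_assert[OF p r])
    have a0: "psd (assert_op qs (lcompl P) \<rho>)" by (rule psd_assert[OF lcompl_proj[OF p] r])
    show "psd (sem (If qs P S1 S0) \<rho>)" using g1 g0 a1 a0 by (simp add: good_def psd_add)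
    have "Re (trace (assert_op qs P \<rho>)) + Re (trace (assert_op qs (lcompl P) \<rho>)) = Re (trace \<rho>)"
      using arg_cong[OF trace_assert_split[OF d p, of \<rho>], of Re] by simp
    then show "Re (trace (sem (If qs P S1 S0) \<rho>)) \<le> Re (trace \<rho>)"
      using g1 g0 a1 a0 unfolding good_def by (fastforce simp: trace_add)
  qed
next
  case (While qs P S)
  then have d: "distinct qs" and p: "lprojector (length qs) P"
    and g: "good (sem S :: 'v qop \<Rightarrow> 'v qop)" by auto
  show ?case unfolding good_def
  proof (intro allI impI conjI)
    fix \<rho> :: "'v qop" assume r: "psd \<rho>"
    note c = while_conv[OF d p g r]
    note s = while_sums(1)[OF d p g r]
    from psd_lim[OF s] c have l: "psd (sem (While qs P S) \<rho>)"
      "(\<lambda>k. Re (trace (wterm qs P S \<rho> k))) sums Re (trace (sem (While qs P S) \<rho>))" by auto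
    then show "psd (sem (While qs P S) \<rho>)" by simp
    show "Re (trace (sem (While qs P S) \<rho>)) \<le> Re (trace \<rho>)"
      using l(2) c by (metis sums_unique sums_summable suminf_le_const)
  qed
qed

lemma sem_Dens: "wf_prog S \<Longrightarrow> \<rho> \<in> Dens \<Longrightarrow> sem S \<rho> \<in> (Dens :: ('v::finite) qop set)"
  using sem_good[of S] by (auto simp: Dens_def good_def)



lemma ws_gD: "well_structured \<alpha> \<gamma> \<Longrightarrow> \<gamma> a \<subseteq> Dens"
  unfolding well_structured_def by (drule conjunct1) (erule spec)
lemma ws_amono: "well_structured \<alpha> \<gamma> \<Longrightarrow> c \<subseteq> c' \<Longrightarrow> c' \<subseteq> Dens \<Longrightarrow> \<alpha> c \<le> \<alpha> c'"
  unfolding well_structured_def by (drule conjunct2, drule conjunct1) blast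
lemma ws_gmono: "well_structured \<alpha> \<gamma> \<Longrightarrow> a \<le> b \<Longrightarrow> \<gamma> a \<subseteq> \<gamma> b"
  unfolding well_structured_def by (drule conjunct2, drule conjunct2, drule conjunct1) (simp add: mono_def)
lemma ws_gal: "well_structured \<alpha> \<gamma> \<Longrightarrow> c \<subseteq> Dens \<Longrightarrow> (c \<subseteq> \<gamma> a \<longleftrightarrow> \<alpha> c \<le> a)"
  unfolding well_structured_def by (drule conjunct2, drule conjunct2, drule conjunct2, drule conjunct1) blast
lemma ws_ag: "well_structured \<alpha> \<gamma> \<Longrightarrow> \<alpha> (\<gamma> a) = a"
  unfolding well_structured_def by (drule conjunct2, drule conjunct2, drule conjunct2, drule conjunct2, drule conjunct1) blast
lemma ws_join:
  fixes \<alpha> :: "('v::finite) qop set \<Rightarrow> 'a::complete_lattice"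
  assumes "well_structured \<alpha> \<gamma>" "\<forall>i\<in>I. \<rho> i \<in> Dens \<and> x i > 0"
    "((\<lambda>i. x i *\<^sub>R \<rho> i) has_sum \<sigma>) I" "\<sigma> \<in> Dens"
  shows "\<alpha> {\<sigma>} = (SUP i\<in>(I::nat set). \<alpha> {\<rho> i})"
proof -
  have "\<forall>(I::nat set) (\<rho>::nat \<Rightarrow> 'v qop) (x::nat \<Rightarrow> real) \<sigma>.
        (\<forall>i\<in>I. \<rho> i \<in> Dens \<and> x i > 0) \<and>
        ((\<lambda>i. x i *\<^sub>R \<rho> i) has_sum \<sigma>) I \<and> \<sigma> \<in> Dens \<longrightarrow>
        \<alpha> {\<sigma>} = (SUP i\<in>I. \<alpha> {\<rho> i})"
    using assms(1) unfolding well_structured_def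
    by (elim conjE) assumption
  then show ?thesis using assms(2-4) by blast
qed

lemma alpha_sup:
  assumes ws: "well_structured \<alpha> \<gamma>" and c: "c \<subseteq> Dens"
  shows "\<alpha> c = (SUP \<rho>\<in>c. \<alpha> {\<rho>})"
proof (rule antisym)
  have "c \<subseteq> \<gamma> (SUP \<rho>\<in>c. \<alpha> {\<rho>})"
  proof
    fix \<rho> assume r: "\<rho> \<in> c"
    have "\<alpha> {\<rho>} \<le> (SUP \<rho>\<in>c. \<alpha> {\<rho>})" using r by (rule SUP_upper)
    then have "{\<rho>} \<subseteq> \<gamma> (SUP \<rho>\<in>c. \<alpha> {\<rho>})" using ws_gal[OF ws, of "{\<rho>}"] r c by blast
    then show "\<rho> \<in> \<gamma> (SUP \<rho>\<in>c. \<alpha> {\<rho>})" by simp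
  qed
  then show "\<alpha> c \<le> (SUP \<rho>\<in>c. \<alpha> {\<rho>})" using ws_gal[OF ws c] by blast
  show "(SUP \<rho>\<in>c. \<alpha> {\<rho>}) \<le> \<alpha> c"
    by (rule SUP_least) (use ws_amono[OF ws _ c] in blast)
qed

lemma alpha_image:
  assumes ws: "well_structured \<alpha> \<gamma>" and c: "f ` c \<subseteq> Dens"
  shows "\<alpha> (f ` c) = (SUP \<rho>\<in>c. \<alpha> {f \<rho>})"
  using alpha_sup[OF ws c] by (simp add: image_image)

lemma alpha_UN:
  assumes ws: "well_structured \<alpha> \<gamma>" and c: "\<And>k. X k \<subseteq> Dens"
  shows "\<alpha> (\<Union>k. X k) = (SUP k. \<alpha> (X k))"
proof -
  have "\<alpha> (\<Union>k. X k) = (SUP \<rho>\<in>(\<Union>k. X k). \<alpha> {\<rho>})" using alpha_sup[OF ws] c by blast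
  also have "\<dots> = (SUP k. SUP \<rho>\<in>X k. \<alpha> {\<rho>})" by (simp add: SUP_UNION)
  also have "\<dots> = (SUP k. \<alpha> (X k))" using alpha_sup[OF ws c] by simp
  finally show ?thesis .
qed

lemma sem_Dens_img: "wf_prog S \<Longrightarrow> c \<subseteq> Dens \<Longrightarrow> sem S ` c \<subseteq> (Dens :: ('v::finite) qop set)"
  using sem_Dens by blast

lemma wf_branches:
  assumes "wf_prog (If qs P S1 S0)"
  shows "wf_prog (Seq (Assert qs P) S1)" "wf_prog (Seq (Assert qs (lcompl P)) S0)"
  using assms lcompl_proj by auto

lemma wf_while_parts:
  assumes "wf_prog (While qs P S)"
  shows "wf_prog (Seq (Assert qs P) S)" "wf_prog (Assert qs (lcompl P))"
  using assms lcompl_proj by auto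

lemma alpha_if1:
  fixes \<alpha> :: "('v::finite) qop set \<Rightarrow> 'a::complete_lattice"
  assumes ws: "well_structured \<alpha> \<gamma>" and w: "wf_prog (If qs P S1 S0)" and r: "\<rho> \<in> Dens"
  shows "\<alpha> {sem (If qs P S1 S0) \<rho>} =
         sup (\<alpha> {sem (Seq (Assert qs P) S1) \<rho>}) (\<alpha> {sem (Seq (Assert qs (lcompl P)) S0) \<rho>})"
proof -
  let ?A = "sem (Seq (Assert qs P) S1) \<rho>" and ?B = "sem (Seq (Assert qs (lcompl P)) S0) \<rho>"
  have A: "?A \<in> Dens" by (rule sem_Dens[OF wf_branches(1)[OF w] r])
  have B: "?B \<in> Dens" by (rule sem_Dens[OF wf_branches(2)[OF w] r])
  have s: "sem (If qs P S1 S0) \<rho> = ?A + ?B" by simp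
  have sD: "?A + ?B \<in> Dens" using sem_Dens[OF w r] s by simp
  define rr where "rr i = (if i = (0::nat) then ?A else ?B)" for i
  have "((\<lambda>i. 1 *\<^sub>R rr i) has_sum (\<Sum>i\<in>{0,1}. 1 *\<^sub>R rr i)) {0::nat,1}"
    by (rule has_sum_finite) simp
  then have hs: "((\<lambda>i. (\<lambda>_. 1::real) i *\<^sub>R rr i) has_sum (?A + ?B)) {0::nat,1}"
    by (simp add: rr_def)
  have "\<alpha> {?A + ?B} = (SUP i\<in>{0::nat,1}. \<alpha> {rr i})"
    by (rule ws_join[OF ws _ hs sD]) (use A B in \<open>auto simp: rr_def\<close>)
  then show ?thesis using s by (simp add: rr_def)
qed

lemma wterm_sem: "wterm qs P S \<rho> k = sem (Assert qs (lcompl P)) ((wstep qs P S ^^ k) \<rho>)"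
  by (simp add: wterm_def)

lemma wstep_sem: "wstep qs P S = sem (Seq (Assert qs P) S)"
  by (simp add: wstep_def fun_eq_iff)

lemma iter_Dens:
  assumes "wf_prog (While qs P S)" "\<rho> \<in> Dens"
  shows "(wstep qs P S ^^ k) \<rho> \<in> (Dens :: ('v::finite) qop set)"
  by (induction k) (use assms sem_Dens[OF wf_while_parts(1)[OF assms(1)]] in \<open>auto simp: wstep_sem\<close>)

lemma wterm_Dens:
  assumes "wf_prog (While qs P S)" "\<rho> \<in> Dens"
  shows "wterm qs P S \<rho> k \<in> (Dens :: ('v::finite) qop set)"
  unfolding wterm_sem by (rule sem_Dens[OF wf_while_parts(2)[OF assms(1)] iter_Dens[OF assms]])

lemma alpha_while1:
  fixes \<alpha> :: "('v::finite) qop set \<Rightarrow> 'a::complete_lattice"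
  assumes ws: "well_structured \<alpha> \<gamma>" and w: "wf_prog (While qs P S)" and r: "\<rho> \<in> Dens"
  shows "\<alpha> {sem (While qs P S) \<rho>} = (SUP k. \<alpha> {wterm qs P S \<rho> k})"
proof -
  have d: "distinct qs" and p: "lprojector (length qs) P" and wS: "wf_prog S" using w by auto
  have hs: "((\<lambda>k. (\<lambda>_. 1::real) k *\<^sub>R wterm qs P S \<rho> k) has_sum sem (While qs P S) \<rho>) UNIV"
    using while_sums(2)[OF d p sem_good[OF wS]] r by (simp add: Dens_def)
  show ?thesis
    by (rule ws_join[OF ws _ hs sem_Dens[OF w r]]) (use wterm_Dens[OF w r] in auto)
qed



lemma soundness:
  fixes \<alpha> :: "('v::finite) qop set \<Rightarrow> 'a::complete_lattice"
  assumes ws: "well_structured \<alpha> \<gamma>"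
    and snd: "\<forall>e. basic e \<and> wf_prog e \<longrightarrow> sound_abs \<alpha> (sem e) (absop e)"
  shows "hoare absop a S b \<Longrightarrow> wf_prog S \<Longrightarrow> valid \<gamma> a S b"
proof (induction rule: hoare.induct)
  case (Exp e a)
  have c: "sem e ` \<gamma> a \<subseteq> Dens" by (rule sem_Dens_img[OF Exp.prems ws_gD[OF ws]])
  have "\<alpha> (sem e ` \<gamma> a) \<le> absop e (\<alpha> (\<gamma> a))"
    using snd Exp ws_gD[OF ws] unfolding sound_abs_def by blast
  then have "\<alpha> (sem e ` \<gamma> a) \<le> absop e a" by (simp add: ws_ag[OF ws])
  then show ?case unfolding valid_def using ws_gal[OF ws c] by blast
next
  case (SeqR a S0 a' S1 b)
  then show ?case by (auto simp: valid_def)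
next
  case (Imp a a' S b' b)
  then show ?case using ws_gmono[OF ws, of a a'] ws_gmono[OF ws, of b' b] by (auto simp: valid_def)
next
  case (Meas a qs P S1 b1 S0 b0)
  have v1: "valid \<gamma> a (Seq (Assert qs P) S1) b1" by (rule Meas.IH(1)[OF wf_branches(1)[OF Meas.prems]])
  have v0: "valid \<gamma> a (Seq (Assert qs (lcompl P)) S0) b0" by (rule Meas.IH(2)[OF wf_branches(2)[OF Meas.prems]])
  show ?case unfolding valid_def
  proof (rule image_subsetI)
    fix \<rho> assume r: "\<rho> \<in> \<gamma> a"
    have rD: "\<rho> \<in> Dens" using r ws_gD[OF ws] by blast
    have A: "sem (Seq (Assert qs P) S1) \<rho> \<in> \<gamma> b1" using v1 r by (auto simp: valid_def)
    have B: "sem (Seq (Assert qs (lcompl P)) S0) \<rho> \<in> \<gamma> b0" using v0 r by (auto simp: valid_def)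
    have "\<alpha> {sem (Seq (Assert qs P) S1) \<rho>} \<le> b1"
      using ws_gal[OF ws, of "{sem (Seq (Assert qs P) S1) \<rho>}" b1] A ws_gD[OF ws] by blast
    moreover have "\<alpha> {sem (Seq (Assert qs (lcompl P)) S0) \<rho>} \<le> b0"
      using ws_gal[OF ws, of "{sem (Seq (Assert qs (lcompl P)) S0) \<rho>}" b0] B ws_gD[OF ws] by blast
    ultimately have "\<alpha> {sem (If qs P S1 S0) \<rho>} \<le> sup b0 b1"
      unfolding alpha_if1[OF ws Meas.prems rD] by (meson le_supI le_supI1 le_supI2)
    moreover have "sem (If qs P S1 S0) \<rho> \<in> Dens" by (rule sem_Dens[OF Meas.prems rD])
    ultimately show "sem (If qs P S1 S0) \<rho> \<in> \<gamma> (sup b0 b1)"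
      using ws_gal[OF ws, of "{sem (If qs P S1 S0) \<rho>}" "sup b0 b1"] by blast
  qed
next
  case (WhileR a qs P S b)
  have v1: "valid \<gamma> a (Seq (Assert qs P) S) a" by (rule WhileR.IH(1)[OF wf_while_parts(1)[OF WhileR.prems]])
  have v0: "valid \<gamma> a (Assert qs (lcompl P)) b" by (rule WhileR.IH(2)[OF wf_while_parts(2)[OF WhileR.prems]])
  show ?case unfolding valid_def
  proof (rule image_subsetI)
    fix \<rho> assume r: "\<rho> \<in> \<gamma> a"
    have rD: "\<rho> \<in> Dens" using r ws_gD[OF ws] by blast
    have it: "(wstep qs P S ^^ k) \<rho> \<in> \<gamma> a" for k
    proof (induction k)
      case 0 then show ?case using r by simp
    next
      case (Suc k) then show ?case using v1 by (auto simp: valid_def wstep_sem)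
    qed
    have t: "wterm qs P S \<rho> k \<in> \<gamma> b" for k
      using it[of k] v0 unfolding wterm_sem valid_def by blast
    have "\<alpha> {wterm qs P S \<rho> k} \<le> b" for k
      using ws_gal[OF ws, of "{wterm qs P S \<rho> k}" b] t[of k] ws_gD[OF ws] by blast
    then have "\<alpha> {sem (While qs P S) \<rho>} \<le> b"
      unfolding alpha_while1[OF ws WhileR.prems rD] by (rule SUP_least)
    moreover have "sem (While qs P S) \<rho> \<in> Dens" by (rule sem_Dens[OF WhileR.prems rD])
    ultimately show "sem (While qs P S) \<rho> \<in> \<gamma> b"
      using ws_gal[OF ws, of "{sem (While qs P S) \<rho>}" b] by blast
  qed
qed

definition pres :: "(('v::finite) qop set \<Rightarrow> 'a) \<Rightarrow> ('a \<Rightarrow> 'v qop set) \<Rightarrow> 'v prog \<Rightarrow> bool" where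
  "pres \<alpha> \<gamma> S \<longleftrightarrow> (\<forall>c. c \<subseteq> Dens \<longrightarrow> \<alpha> (sem S ` c) = \<alpha> (sem S ` \<gamma> (\<alpha> c)))"

lemma pres_basic:
  fixes \<alpha> :: "('v::finite) qop set \<Rightarrow> 'a::complete_lattice"
  assumes ws: "well_structured \<alpha> \<gamma>" and ca: "complete_abs \<alpha> (sem e) f"
  shows "pres \<alpha> \<gamma> e"
  unfolding pres_def
proof (intro allI impI)
  fix c :: "'v qop set" assume c: "c \<subseteq> Dens"
  have "\<alpha> (sem e ` c) = f (\<alpha> c)" using ca c unfolding complete_abs_def by blast
  moreover have "\<alpha> (sem e ` \<gamma> (\<alpha> c)) = f (\<alpha> (\<gamma> (\<alpha> c)))" using ca ws_gD[OF ws] unfolding complete_abs_def by blast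
  ultimately show "\<alpha> (sem e ` c) = \<alpha> (sem e ` \<gamma> (\<alpha> c))" by (simp add: ws_ag[OF ws])
qed

lemma pres_seq:
  fixes \<alpha> :: "('v::finite) qop set \<Rightarrow> 'a::complete_lattice"
  assumes ws: "well_structured \<alpha> \<gamma>" and w0: "wf_prog S0"
    and p0: "pres \<alpha> \<gamma> S0" and p1: "pres \<alpha> \<gamma> S1"
  shows "pres \<alpha> \<gamma> (Seq S0 S1)"
  unfolding pres_def
proof (intro allI impI)
  fix c :: "'v qop set" assume c: "c \<subseteq> Dens"
  have img: "sem (Seq S0 S1) ` X = sem S1 ` (sem S0 ` X)" for X by (auto simp: image_image)
  have c0: "sem S0 ` c \<subseteq> Dens" by (rule sem_Dens_img[OF w0 c])
  have d0: "sem S0 ` \<gamma> (\<alpha> c) \<subseteq> Dens" by (rule sem_Dens_img[OF w0 ws_gD[OF ws]])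
  have "\<alpha> (sem S1 ` (sem S0 ` c)) = \<alpha> (sem S1 ` \<gamma> (\<alpha> (sem S0 ` c)))" using p1 c0 unfolding pres_def by blast
  also have "\<alpha> (sem S0 ` c) = \<alpha> (sem S0 ` \<gamma> (\<alpha> c))" using p0 c unfolding pres_def by blast
  also have "\<alpha> (sem S1 ` \<gamma> (\<alpha> (sem S0 ` \<gamma> (\<alpha> c)))) = \<alpha> (sem S1 ` (sem S0 ` \<gamma> (\<alpha> c)))"
    using p1 d0 unfolding pres_def by metis
  finally show "\<alpha> (sem (Seq S0 S1) ` c) = \<alpha> (sem (Seq S0 S1) ` \<gamma> (\<alpha> c))" by (simp only: img)
qed

lemma alpha_if_img:
  fixes \<alpha> :: "('v::finite) qop set \<Rightarrow> 'a::complete_lattice"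
  assumes ws: "well_structured \<alpha> \<gamma>" and w: "wf_prog (If qs P S1 S0)" and c: "c \<subseteq> Dens"
  shows "\<alpha> (sem (If qs P S1 S0) ` c) =
         sup (\<alpha> (sem (Seq (Assert qs P) S1) ` c)) (\<alpha> (sem (Seq (Assert qs (lcompl P)) S0) ` c))"
proof -
  have "\<alpha> (sem (If qs P S1 S0) ` c) = (SUP \<rho>\<in>c. \<alpha> {sem (If qs P S1 S0) \<rho>})"
    by (rule alpha_image[OF ws sem_Dens_img[OF w c]])
  also have "\<dots> = (SUP \<rho>\<in>c. sup (\<alpha> {sem (Seq (Assert qs P) S1) \<rho>}) (\<alpha> {sem (Seq (Assert qs (lcompl P)) S0) \<rho>}))"
    using alpha_if1[OF ws w] c by (intro SUP_cong refl) blast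
  also have "\<dots> = sup (SUP \<rho>\<in>c. \<alpha> {sem (Seq (Assert qs P) S1) \<rho>}) (SUP \<rho>\<in>c. \<alpha> {sem (Seq (Assert qs (lcompl P)) S0) \<rho>})"
    by (rule Complete_Lattices.SUP_sup_distrib[symmetric])
  also have "\<dots> = sup (\<alpha> (sem (Seq (Assert qs P) S1) ` c)) (\<alpha> (sem (Seq (Assert qs (lcompl P)) S0) ` c))"
    using alpha_image[OF ws sem_Dens_img[OF wf_branches(1)[OF w] c]]
      alpha_image[OF ws sem_Dens_img[OF wf_branches(2)[OF w] c]] by simp
  finally show ?thesis .
qed

lemma pres_if:
  fixes \<alpha> :: "('v::finite) qop set \<Rightarrow> 'a::complete_lattice"
  assumes ws: "well_structured \<alpha> \<gamma>" and w: "wf_prog (If qs P S1 S0)"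
    and p1: "pres \<alpha> \<gamma> (Seq (Assert qs P) S1)" and p0: "pres \<alpha> \<gamma> (Seq (Assert qs (lcompl P)) S0)"
  shows "pres \<alpha> \<gamma> (If qs P S1 S0)"
  unfolding pres_def
proof (intro allI impI)
  fix c :: "'v qop set" assume c: "c \<subseteq> Dens"
  have d: "\<gamma> (\<alpha> c) \<subseteq> Dens" by (rule ws_gD[OF ws])
  show "\<alpha> (sem (If qs P S1 S0) ` c) = \<alpha> (sem (If qs P S1 S0) ` \<gamma> (\<alpha> c))"
    unfolding alpha_if_img[OF ws w c] alpha_if_img[OF ws w d]
    using p1 p0 c unfolding pres_def by metis
qed

fun Pw :: "'v list \<Rightarrow> lop \<Rightarrow> 'v prog \<Rightarrow> nat \<Rightarrow> 'v prog" where
  "Pw qs P S 0 = Skip"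
| "Pw qs P S (Suc k) = Seq (Pw qs P S k) (Seq (Assert qs P) S)"

definition Wk :: "'v list \<Rightarrow> lop \<Rightarrow> 'v prog \<Rightarrow> nat \<Rightarrow> 'v prog" where
  "Wk qs P S k = Seq (Pw qs P S k) (Assert qs (lcompl P))"

lemma sem_Pw: "sem (Pw qs P S k) \<sigma> = (wstep qs P S ^^ k) (\<sigma> :: ('v::finite) qop)"
  by (induction k arbitrary: \<sigma>) (simp_all add: wstep_def)

lemma sem_Wk: "sem (Wk qs P S k) \<sigma> = wterm qs P S (\<sigma> :: ('v::finite) qop) k"
  by (simp add: Wk_def sem_Pw wterm_def)

lemma wf_Pw: "wf_prog (While qs P S) \<Longrightarrow> wf_prog (Pw qs P S k)"
  by (induction k) auto

lemma wf_Wk: "wf_prog (While qs P S) \<Longrightarrow> wf_prog (Wk qs P S k)"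
  using wf_Pw lcompl_proj by (auto simp: Wk_def)

lemma alpha_while_img:
  fixes \<alpha> :: "('v::finite) qop set \<Rightarrow> 'a::complete_lattice"
  assumes ws: "well_structured \<alpha> \<gamma>" and w: "wf_prog (While qs P S)" and c: "c \<subseteq> Dens"
  shows "\<alpha> (sem (While qs P S) ` c) = (SUP k. \<alpha> (sem (Wk qs P S k) ` c))"
proof -
  have "\<alpha> (sem (While qs P S) ` c) = (SUP \<rho>\<in>c. \<alpha> {sem (While qs P S) \<rho>})"
    by (rule alpha_image[OF ws sem_Dens_img[OF w c]])
  also have "\<dots> = (SUP \<rho>\<in>c. SUP k. \<alpha> {wterm qs P S \<rho> k})"
    using alpha_while1[OF ws w] c by (intro SUP_cong refl) blast
  also have "\<dots> = (SUP k. SUP \<rho>\<in>c. \<alpha> {wterm qs P S \<rho> k})"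
    by (rule SUP_commute)
  also have "\<dots> = (SUP k. \<alpha> (sem (Wk qs P S k) ` c))"
  proof (rule SUP_cong[OF refl])
    fix k
    show "(SUP \<rho>\<in>c. \<alpha> {wterm qs P S \<rho> k}) = \<alpha> (sem (Wk qs P S k) ` c)"
      using alpha_image[OF ws sem_Dens_img[OF wf_Wk[OF w] c]] by (simp add: sem_Wk)
  qed
  finally show ?thesis .
qed

lemma pres_while:
  fixes \<alpha> :: "('v::finite) qop set \<Rightarrow> 'a::complete_lattice"
  assumes ws: "well_structured \<alpha> \<gamma>" and w: "wf_prog (While qs P S)"
    and p: "\<And>k. pres \<alpha> \<gamma> (Wk qs P S k)"
  shows "pres \<alpha> \<gamma> (While qs P S)"
  unfolding pres_def
proof (intro allI impI)
  fix c :: "'v qop set" assume c: "c \<subseteq> Dens"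
  have d: "\<gamma> (\<alpha> c) \<subseteq> Dens" by (rule ws_gD[OF ws])
  show "\<alpha> (sem (While qs P S) ` c) = \<alpha> (sem (While qs P S) ` \<gamma> (\<alpha> c))"
    unfolding alpha_while_img[OF ws w c] alpha_while_img[OF ws w d]
    using p c unfolding pres_def by simp
qed

lemma pres_all:
  fixes \<alpha> :: "('v::finite) qop set \<Rightarrow> 'a::complete_lattice"
  assumes ws: "well_structured \<alpha> \<gamma>"
    and cmp: "\<forall>e. basic e \<and> wf_prog e \<longrightarrow> complete_abs \<alpha> (sem e) (absop e)"
  shows "wf_prog S \<Longrightarrow> pres \<alpha> \<gamma> S"
proof (induction S)
  case Skip then show ?case using cmp by (intro pres_basic[OF ws, of _ "absop Skip"]) simp
next
  case (Init qs) then show ?case using cmp by (intro pres_basic[OF ws, of _ "absop (Init qs)"]) simp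
next
  case (Apply qs U) then show ?case using cmp by (intro pres_basic[OF ws, of _ "absop (Apply qs U)"]) simp
next
  case (Assert qs P) then show ?case using cmp by (intro pres_basic[OF ws, of _ "absop (Assert qs P)"]) simp
next
  case (Seq S0 S1) then show ?case using pres_seq[OF ws] by simp
next
  case (If qs P S1 S0)
  have a1: "pres \<alpha> \<gamma> (Assert qs P)" using If.prems cmp by (intro pres_basic[OF ws, of _ "absop (Assert qs P)"]) simp
  have a0: "pres \<alpha> \<gamma> (Assert qs (lcompl P))"
    using If.prems cmp lcompl_proj by (intro pres_basic[OF ws, of _ "absop (Assert qs (lcompl P))"]) simp
  show ?case
    by (rule pres_if[OF ws If.prems pres_seq[OF ws _ a1] pres_seq[OF ws _ a0]])
       (use If lcompl_proj in auto)
next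
  case (While qs P S)
  have pS: "pres \<alpha> \<gamma> S" using While by simp
  have a1: "pres \<alpha> \<gamma> (Assert qs P)" using While.prems cmp by (intro pres_basic[OF ws, of _ "absop (Assert qs P)"]) simp
  have a0: "pres \<alpha> \<gamma> (Assert qs (lcompl P))"
    using While.prems cmp lcompl_proj by (intro pres_basic[OF ws, of _ "absop (Assert qs (lcompl P))"]) simp
  have sk: "pres \<alpha> \<gamma> Skip" using cmp by (intro pres_basic[OF ws, of _ "absop Skip"]) simp
  have body: "pres \<alpha> \<gamma> (Seq (Assert qs P) S)" by (rule pres_seq[OF ws _ a1 pS]) (use While.prems in auto)
  have pw: "pres \<alpha> \<gamma> (Pw qs P S k)" for k
  proof (induction k)
    case 0 then show ?case using sk by simp
  next
    case (Suc k) then show ?case using pres_seq[OF ws wf_Pw[OF While.prems] _ body] by simp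
  qed
  show ?case
    by (rule pres_while[OF ws While.prems])
       (unfold Wk_def, rule pres_seq[OF ws wf_Pw[OF While.prems] pw a0])
qed

lemma hsp_basic:
  fixes \<alpha> :: "('v::finite) qop set \<Rightarrow> 'a::complete_lattice"
  assumes ws: "well_structured \<alpha> \<gamma>" and ca: "complete_abs \<alpha> (sem e) (absop e)" and b: "basic e"
  shows "hoare absop a e (\<alpha> (sem e ` \<gamma> a))"
proof -
  have "\<alpha> (sem e ` \<gamma> a) = absop e (\<alpha> (\<gamma> a))" using ca ws_gD[OF ws] unfolding complete_abs_def by blast
  then have "\<alpha> (sem e ` \<gamma> a) = absop e a" by (simp add: ws_ag[OF ws])
  then show ?thesis using hoare.Exp[OF b] by simp
qed

lemma hsp_seq:
  fixes \<alpha> :: "('v::finite) qop set \<Rightarrow> 'a::complete_lattice"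
  assumes ws: "well_structured \<alpha> \<gamma>" and w0: "wf_prog S0"
    and h0: "\<And>a. hoare absop a S0 (\<alpha> (sem S0 ` \<gamma> a))"
    and h1: "\<And>a. hoare absop a S1 (\<alpha> (sem S1 ` \<gamma> a))"
    and p1: "pres \<alpha> \<gamma> S1"
  shows "hoare absop a (Seq S0 S1) (\<alpha> (sem (Seq S0 S1) ` \<gamma> a))"
proof -
  let ?a' = "\<alpha> (sem S0 ` \<gamma> a)"
  have c: "sem S0 ` \<gamma> a \<subseteq> Dens" by (rule sem_Dens_img[OF w0 ws_gD[OF ws]])
  have eq: "\<alpha> (sem S1 ` \<gamma> ?a') = \<alpha> (sem (Seq S0 S1) ` \<gamma> a)"
  proof -
    have "\<alpha> (sem S1 ` (sem S0 ` \<gamma> a)) = \<alpha> (sem S1 ` \<gamma> ?a')" using p1 c unfolding pres_def by blast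
    moreover have "sem (Seq S0 S1) ` \<gamma> a = sem S1 ` (sem S0 ` \<gamma> a)" by (auto simp: image_image)
    ultimately show ?thesis by simp
  qed
  show ?thesis using hoare.SeqR[OF h0 h1[of ?a']] eq by simp
qed

lemma hsp:
  fixes \<alpha> :: "('v::finite) qop set \<Rightarrow> 'a::complete_lattice"
  assumes ws: "well_structured \<alpha> \<gamma>"
    and cmp: "\<forall>e. basic e \<and> wf_prog e \<longrightarrow> complete_abs \<alpha> (sem e) (absop e)"
  shows "wf_prog S \<Longrightarrow> hoare absop a S (\<alpha> (sem S ` \<gamma> a))"
proof (induction S arbitrary: a)
  case Skip then show ?case using cmp by (intro hsp_basic[OF ws]) simp_all
next
  case (Init qs) then show ?case using cmp by (intro hsp_basic[OF ws]) simp_all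
next
  case (Apply qs U) then show ?case using cmp by (intro hsp_basic[OF ws]) simp_all
next
  case (Assert qs P) then show ?case using cmp by (intro hsp_basic[OF ws]) simp_all
next
  case (Seq S0 S1)
  then show ?case using hsp_seq[OF ws _ Seq.IH(1) Seq.IH(2) pres_all[OF ws cmp]] by simp
next
  case (If qs P S1 S0)
  have w1: "wf_prog (Seq (Assert qs P) S1)" and w0: "wf_prog (Seq (Assert qs (lcompl P)) S0)"
    using wf_branches[OF If.prems] by auto
  have hA: "hoare absop a (Assert qs P) (\<alpha> (sem (Assert qs P) ` \<gamma> a))" for a
    using cmp If.prems by (intro hsp_basic[OF ws]) simp_all
  have hA0: "hoare absop a (Assert qs (lcompl P)) (\<alpha> (sem (Assert qs (lcompl P)) ` \<gamma> a))" for a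
    using cmp If.prems lcompl_proj by (intro hsp_basic[OF ws]) simp_all
  have h1: "hoare absop a (Seq (Assert qs P) S1) (\<alpha> (sem (Seq (Assert qs P) S1) ` \<gamma> a))"
    by (rule hsp_seq[OF ws _ hA If.IH(1) pres_all[OF ws cmp]]) (use If.prems in auto)
  have h0: "hoare absop a (Seq (Assert qs (lcompl P)) S0) (\<alpha> (sem (Seq (Assert qs (lcompl P)) S0) ` \<gamma> a))"
    by (rule hsp_seq[OF ws _ hA0 If.IH(2) pres_all[OF ws cmp]]) (use If.prems lcompl_proj in auto)
  show ?case
    using hoare.Meas[OF h1 h0] alpha_if_img[OF ws If.prems ws_gD[OF ws]] by (simp add: sup_commute)
next
  case (While qs P S)
  have wS: "wf_prog S" using While.prems by simp
  have wB: "wf_prog (Seq (Assert qs P) S)" and wA: "wf_prog (Assert qs (lcompl P))"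
    using wf_while_parts[OF While.prems] by auto
  define U where "U = (\<Union>k. (wstep qs P S ^^ k) ` \<gamma> a)"
  have UD: "U \<subseteq> Dens" unfolding U_def using iter_Dens[OF While.prems] ws_gD[OF ws] by blast
  define inv where "inv = \<alpha> U"
  have a_inv: "a \<le> inv"
  proof -
    have z: "(wstep qs P S ^^ 0) ` \<gamma> a = \<gamma> a" by simp
    have "\<gamma> a \<subseteq> U" unfolding U_def using z by blast
    then have "\<alpha> (\<gamma> a) \<le> \<alpha> U" by (rule ws_amono[OF ws _ UD])
    then show ?thesis by (simp add: ws_ag[OF ws] inv_def)
  qed
  have hA: "hoare absop b (Assert qs P) (\<alpha> (sem (Assert qs P) ` \<gamma> b))" for b
    using cmp While.prems by (intro hsp_basic[OF ws]) simp_all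
  have pA: "pres \<alpha> \<gamma> (Assert qs P)" by (rule pres_all[OF ws cmp]) (use While.prems in simp)
  have pA0: "pres \<alpha> \<gamma> (Assert qs (lcompl P))" by (rule pres_all[OF ws cmp wA])
  have pB: "pres \<alpha> \<gamma> (Seq (Assert qs P) S)" by (rule pres_all[OF ws cmp wB])
  have hB: "hoare absop inv (Seq (Assert qs P) S) (\<alpha> (sem (Seq (Assert qs P) S) ` \<gamma> inv))"
    by (rule hsp_seq[OF ws _ hA While.IH pres_all[OF ws cmp wS]]) (use While.prems wS in auto)
  have "\<alpha> (sem (Seq (Assert qs P) S) ` \<gamma> inv) = \<alpha> (sem (Seq (Assert qs P) S) ` U)"
    using pB UD unfolding pres_def inv_def by metis
  also have "\<dots> \<le> \<alpha> U"
  proof (rule ws_amono[OF ws _ UD])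
    show "sem (Seq (Assert qs P) S) ` U \<subseteq> U"
    proof
      fix x assume "x \<in> sem (Seq (Assert qs P) S) ` U"
      then obtain k \<rho> where r: "\<rho> \<in> \<gamma> a" and x: "x = sem (Seq (Assert qs P) S) ((wstep qs P S ^^ k) \<rho>)"
        unfolding U_def by blast
      have "x = (wstep qs P S ^^ Suc k) \<rho>" using x by (simp add: wstep_sem)
      then show "x \<in> U" using r unfolding U_def by blast
    qed
  qed
  finally have hB': "hoare absop inv (Seq (Assert qs P) S) inv"
    using hoare.Imp[OF order.refl hB] inv_def by simp
  have hA0: "hoare absop inv (Assert qs (lcompl P)) (\<alpha> (sem (Assert qs (lcompl P)) ` \<gamma> inv))"
    using cmp wA by (intro hsp_basic[OF ws]) simp_all
  have "\<alpha> (sem (Assert qs (lcompl P)) ` \<gamma> inv) = \<alpha> (sem (Assert qs (lcompl P)) ` U)"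
    using pA0 UD unfolding pres_def inv_def by metis
  also have "sem (Assert qs (lcompl P)) ` U = (\<Union>k. sem (Wk qs P S k) ` \<gamma> a)"
    unfolding U_def by (auto simp: sem_Wk wterm_sem image_UN image_image)
  also have "\<alpha> \<dots> = (SUP k. \<alpha> (sem (Wk qs P S k) ` \<gamma> a))"
    by (rule alpha_UN[OF ws]) (rule sem_Dens_img[OF wf_Wk[OF While.prems] ws_gD[OF ws]])
  also have "\<dots> = \<alpha> (sem (While qs P S) ` \<gamma> a)"
    by (rule alpha_while_img[OF ws While.prems ws_gD[OF ws], symmetric])
  finally have hA0': "hoare absop inv (Assert qs (lcompl P)) (\<alpha> (sem (While qs P S) ` \<gamma> a))"
    using hA0 by simp
  show ?case
    by (rule hoare.Imp[OF a_inv hoare.WhileR[OF hB' hA0'] order.refl])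
qed

theorem mainTheorem9:
  fixes \<alpha> :: "('v::finite) qop set \<Rightarrow> 'a::complete_lattice"
    and \<gamma> :: "'a \<Rightarrow> 'v qop set"
    and absop :: "'v prog \<Rightarrow> 'a \<Rightarrow> 'a"
  assumes ws: "well_structured \<alpha> \<gamma>"
    and mono_abs: "\<forall>e. basic e \<and> wf_prog e \<longrightarrow> mono (absop e)"
  shows "((\<forall>e. basic e \<and> wf_prog e \<longrightarrow> sound_abs \<alpha> (sem e) (absop e)) \<longrightarrow>
            (\<forall>S a b. wf_prog S \<longrightarrow> hoare absop a S b \<longrightarrow> valid \<gamma> a S b))
       \<and> ((\<forall>e. basic e \<and> wf_prog e \<longrightarrow> complete_abs \<alpha> (sem e) (absop e)) \<longrightarrow>
            (\<forall>S a b. wf_prog S \<longrightarrow> (hoare absop a S b \<longleftrightarrow> valid \<gamma> a S b)))"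
proof (intro conjI impI allI)
  fix S :: "'v prog" and a b :: 'a
  assume snd: "\<forall>e. basic e \<and> wf_prog e \<longrightarrow> sound_abs \<alpha> (sem e) (absop e)"
    and w: "wf_prog S" and h: "hoare absop a S b"
  show "valid \<gamma> a S b" by (rule soundness[OF ws snd h w])
next
  fix S :: "'v prog" and a b :: 'a
  assume cmp: "\<forall>e. basic e \<and> wf_prog e \<longrightarrow> complete_abs \<alpha> (sem e) (absop e)"
    and w: "wf_prog S"
  have snd: "\<forall>e. basic e \<and> wf_prog e \<longrightarrow> sound_abs \<alpha> (sem e) (absop e)"
    using cmp unfolding sound_abs_def complete_abs_def by simp
  show "hoare absop a S b \<longleftrightarrow> valid \<gamma> a S b"
  proof
    assume "hoare absop a S b"
    then show "valid \<gamma> a S b" by (rule soundness[OF ws snd _ w])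
  next
    assume v: "valid \<gamma> a S b"
    have c: "sem S ` \<gamma> a \<subseteq> Dens" by (rule sem_Dens_img[OF w ws_gD[OF ws]])
    have "\<alpha> (sem S ` \<gamma> a) \<le> b" using v ws_gal[OF ws c] unfolding valid_def by blast
    then show "hoare absop a S b" by (rule hoare.Imp[OF order.refl hsp[OF ws cmp w]])
  qed
qed


end
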